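(* Let $t\geq 1$ and let $r_1,\ldots,r_t$ be positive integers with $\gcd(r_i,r_j)=1$ for all $i\neq j$. Let $F$ be the free group on $\{x_1,\ldots,x_t\}$ and let $S$ be the normal closure in $F$ of $\{x_1^{r_1},\ldots,x_t^{r_t}\}$ (so $F/S$ is the free product of the cyclic groups $\langle x_i\mid x_i^{r_i}\rangle\cong\mathbb{Z}_{r_i}$). Define $\rho_1(S)=S$ and $\rho_{n+1}(S)=[\rho_n(S),F]$ for $n\geq 1$. Then (i) $S\cap\gamma_2(F)=\rho_2(S)$; (ii) $S\cap\gamma_3(F)=\rho_3(S)$, and consequently $\rho_2(S)\cap\gamma_3(F)=\rho_3(S)$.
   Context: $\gamma_k(F)$ denotes the $k$-th term of the lower central series of $F$: $\gamma_1(F)=F$, $\gamma_{k+1}(F)=[\gamma_k(F),F]$. For subgroups $A,B$, $[A,B]$ is the subgroup generated by all commutators $[a,b]$, $a\in A$, $b\in B$. *)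

theory Defs
  imports "HOL-Algebra.Algebra"
begin

text \<open>Words in letters x_i (False) and x_i inverse (True).\<close>

fun reduced_word :: "(nat \<times> bool) list \<Rightarrow> bool" where
  "reduced_word [] = True"
| "reduced_word [_] = True"
| "reduced_word (a # b # w) = ((\<not> (fst a = fst b \<and> snd a \<noteq> snd b)) \<and> reduced_word (b # w))"

fun eval_word :: "'a monoid \<Rightarrow> (nat \<Rightarrow> 'a) \<Rightarrow> (nat \<times> bool) list \<Rightarrow> 'a" where
  "eval_word F x [] = \<one>\<^bsub>F\<^esub>"
| "eval_word F x ((i, b) # w) =
     (if b then inv\<^bsub>F\<^esub> (x i) else x i) \<otimes>\<^bsub>F\<^esub> eval_word F x w"

definition free_group_on :: "'a monoid \<Rightarrow> (nat \<Rightarrow> 'a) \<Rightarrow> nat set \<Rightarrow> bool" where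
  "free_group_on F x I \<longleftrightarrow>
     group F \<and> x ` I \<subseteq> carrier F \<and> generate F (x ` I) = carrier F \<and>
     (\<forall>w. w \<noteq> [] \<and> set (map fst w) \<subseteq> I \<and> reduced_word w \<longrightarrow> eval_word F x w \<noteq> \<one>\<^bsub>F\<^esub>)"

definition comm_subgroup :: "'a monoid \<Rightarrow> 'a set \<Rightarrow> 'a set \<Rightarrow> 'a set" where
  "comm_subgroup F A B = generate F
     {inv\<^bsub>F\<^esub> a \<otimes>\<^bsub>F\<^esub> inv\<^bsub>F\<^esub> b \<otimes>\<^bsub>F\<^esub> a \<otimes>\<^bsub>F\<^esub> b | a b. a \<in> A \<and> b \<in> B}"

text \<open>Lower central series: gamma 1 = F, gamma (k+1) = [gamma k, F]. (gamma 0 := F, unused.)\<close>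
fun lower_central :: "'a monoid \<Rightarrow> nat \<Rightarrow> 'a set" where
  "lower_central F 0 = carrier F"
| "lower_central F (Suc 0) = carrier F"
| "lower_central F (Suc (Suc k)) = comm_subgroup F (lower_central F (Suc k)) (carrier F)"

text \<open>rho 1 S = S, rho (n+1) S = [rho n S, F]. (rho 0 := S, unused.)\<close>
fun rho :: "'a monoid \<Rightarrow> 'a set \<Rightarrow> nat \<Rightarrow> 'a set" where
  "rho F S 0 = S"
| "rho F S (Suc 0) = S"
| "rho F S (Suc (Suc n)) = comm_subgroup F (rho F S (Suc n)) (carrier F)"

definition normal_closure :: "'a monoid \<Rightarrow> 'a set \<Rightarrow> 'a set" where
  "normal_closure F R = generate F {g \<otimes>\<^bsub>F\<^esub> s \<otimes>\<^bsub>F\<^esub> inv\<^bsub>F\<^esub> g | g s. g \<in> carrier F \<and> s \<in> R}"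

end

theory Submission
  imports Defs
begin

definition lprod :: "('b,'c) monoid_scheme \<Rightarrow> ('i \<Rightarrow> 'b) \<Rightarrow> 'i list \<Rightarrow> ('i \<Rightarrow> int) \<Rightarrow> 'b" where
  "lprod G w L n = foldr (\<lambda>l acc. w l [^]\<^bsub>G\<^esub> n l \<otimes>\<^bsub>G\<^esub> acc) L \<one>\<^bsub>G\<^esub>"

lemma lprod_Nil[simp]: "lprod G w [] n = \<one>\<^bsub>G\<^esub>" by (simp add: lprod_def)
lemma lprod_Cons[simp]: "lprod G w (l # L) n = w l [^]\<^bsub>G\<^esub> n l \<otimes>\<^bsub>G\<^esub> lprod G w L n"
  by (simp add: lprod_def)

context group begin

lemma lprod_closed: "w ` set L \<subseteq> carrier G \<Longrightarrow> lprod G w L n \<in> carrier G"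
  by (induction L) auto

definition central :: "'a \<Rightarrow> bool" where
  "central z \<longleftrightarrow> z \<in> carrier G \<and> (\<forall>g\<in>carrier G. z \<otimes> g = g \<otimes> z)"

lemma central_mult: "central a \<Longrightarrow> central b \<Longrightarrow> central (a \<otimes> b)"
proof -
  assume a: "central a" and b: "central b"
  have ac: "a \<in> carrier G" and bc: "b \<in> carrier G" using a b central_def by auto
  have "a \<otimes> b \<otimes> g = g \<otimes> (a \<otimes> b)" if g: "g \<in> carrier G" for g
  proof -
    have "a \<otimes> b \<otimes> g = a \<otimes> (b \<otimes> g)" using ac bc g by (simp add: m_assoc)
    also have "b \<otimes> g = g \<otimes> b" using b g central_def by blast
    also have "a \<otimes> (g \<otimes> b) = (a \<otimes> g) \<otimes> b" using ac bc g by (simp add: m_assoc)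
    also have "a \<otimes> g = g \<otimes> a" using a g central_def by blast
    finally show ?thesis using ac bc g by (simp add: m_assoc)
  qed
  then show ?thesis using ac bc unfolding central_def by simp
qed

lemma central_one: "central \<one>" unfolding central_def by simp

lemma central_inv: "central a \<Longrightarrow> central (inv a)"
proof -
  assume a: "central a"
  have "inv a \<otimes> g = g \<otimes> inv a" if g: "g \<in> carrier G" for g
  proof -
    have "a \<otimes> inv g = inv g \<otimes> a" using a g inv_closed[OF g] unfolding central_def by blast
    then have e: "inv (a \<otimes> inv g) = inv (inv g \<otimes> a)" by simp
    have ac: "a \<in> carrier G" using a central_def by blast
    have x: "inv (a \<otimes> inv g) = g \<otimes> inv a" using ac g by (simp add: inv_mult_group)
    have y: "inv (inv g \<otimes> a) = inv a \<otimes> g" using ac g by (simp add: inv_mult_group)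
    show ?thesis using e unfolding x y by (rule sym)
  qed
  then show ?thesis using a unfolding central_def by simp
qed

lemma central_npow: "central a \<Longrightarrow> central (a [^] (n::nat))"
  by (induction n) (auto intro: central_mult central_one)

lemma central_pow: "central a \<Longrightarrow> central (a [^] (n::int))"
proof -
  assume a: "central a"
  have e: "a [^] n = (if n < 0 then inv (a [^] nat (-n)) else a [^] nat n)" by (rule int_pow_def2)
  show ?thesis
  proof (cases "n < 0")
    case True
    then show ?thesis unfolding e using central_inv[OF central_npow[OF a]] by (simp only: if_True)
  next
    case False
    then show ?thesis unfolding e using central_npow[OF a] by (simp only: if_False)
  qed
qed

lemma lprod_central: "\<forall>l\<in>set L. central (w l) \<Longrightarrow> central (lprod G w L n)"
  by (induction L) (auto intro: central_mult central_one central_pow)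

lemma lprod_add: "\<forall>l\<in>set L. central (w l) \<Longrightarrow>
   lprod G w L n \<otimes> lprod G w L m = lprod G w L (\<lambda>l. n l + m l)"
proof (induction L)
  case Nil then show ?case by simp
next
  case (Cons a L)
  have ca: "central (w a)" using Cons by auto
  have cL: "central (lprod G w L n)" "central (lprod G w L m)" using Cons by (auto intro: lprod_central)
  have c1: "central (w a [^] n a)" "central (w a [^] m a)" using ca by (auto intro: central_pow)
  have wa: "w a \<in> carrier G" using ca central_def by auto
  have "lprod G w (a # L) n \<otimes> lprod G w (a # L) m
     = (w a [^] n a \<otimes> w a [^] m a) \<otimes> (lprod G w L n \<otimes> lprod G w L m)"
  proof -
    let ?x = "w a [^] n a" and ?y = "w a [^] m a" and ?P = "lprod G w L n" and ?R = "lprod G w L m"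
    have xc: "?x \<in> carrier G" "?y \<in> carrier G" "?P \<in> carrier G" "?R \<in> carrier G"
      using c1 cL central_def by auto
    have com: "?P \<otimes> ?y = ?y \<otimes> ?P" using cL(1) xc central_def by blast
    have "(?x \<otimes> ?P) \<otimes> (?y \<otimes> ?R) = ?x \<otimes> ((?P \<otimes> ?y) \<otimes> ?R)" using xc by (simp add: m_assoc)
    also have "\<dots> = ?x \<otimes> ((?y \<otimes> ?P) \<otimes> ?R)" by (simp only: com)
    also have "\<dots> = (?x \<otimes> ?y) \<otimes> (?P \<otimes> ?R)" using xc by (simp add: m_assoc)
    finally show ?thesis by simp
  qed
  also have "\<dots> = w a [^] (n a + m a) \<otimes> lprod G w L (\<lambda>l. n l + m l)"
    using Cons wa by (simp add: int_pow_mult)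
  finally show ?case by simp
qed

lemma lprod_zero: "\<forall>l\<in>set L. n l = 0 \<Longrightarrow> w ` set L \<subseteq> carrier G \<Longrightarrow> lprod G w L n = \<one>"
  by (induction L) auto

lemma lprod_delta: "distinct L \<Longrightarrow> l \<in> set L \<Longrightarrow> w ` set L \<subseteq> carrier G \<Longrightarrow>
   lprod G w L (\<lambda>k. if k = l then 1 else 0) = w l"
proof (induction L)
  case Nil then show ?case by simp
next
  case (Cons a L)
  show ?case
  proof (cases "a = l")
    case True
    then have "lprod G w L (\<lambda>k. if k = l then 1 else 0) = \<one>"
      using Cons by (intro lprod_zero) auto
    then show ?thesis using True Cons by simp
  next
    case False
    then show ?thesis using Cons by auto
  qed
qed

lemma lprod_neg: "\<forall>l\<in>set L. central (w l) \<Longrightarrow>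
   lprod G w L (\<lambda>l. - n l) = inv (lprod G w L n)"
proof -
  assume c: "\<forall>l\<in>set L. central (w l)"
  have wc: "w ` set L \<subseteq> carrier G" using c central_def by auto
  have "lprod G w L n \<otimes> lprod G w L (\<lambda>l. - n l) = \<one>"
    using lprod_add[OF c, of n "\<lambda>l. - n l"] lprod_zero[OF _ wc] by simp
  moreover have "lprod G w L (\<lambda>l. - n l) \<otimes> lprod G w L n = lprod G w L n \<otimes> lprod G w L (\<lambda>l. - n l)"
  proof -
    have "\<forall>g\<in>carrier G. lprod G w L n \<otimes> g = g \<otimes> lprod G w L n"
      using lprod_central[OF c, of n] unfolding central_def by blast
    then show ?thesis using lprod_closed[OF wc, of "\<lambda>l. - n l"] by simp
  qed
  ultimately show ?thesis using lprod_closed[OF wc, of n] lprod_closed[OF wc, of "\<lambda>l. - n l"]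
    by (intro sym[OF inv_equality]) auto
qed

lemma lprod_append: "w ` set L \<subseteq> carrier G \<Longrightarrow> w ` set L' \<subseteq> carrier G \<Longrightarrow>
   lprod G w (L @ L') n = lprod G w L n \<otimes> lprod G w L' n"
proof (induction L)
  case Nil then show ?case using lprod_closed[of w L' n] by simp
next
  case (Cons a L)
  then show ?case using lprod_closed[of w L n] lprod_closed[of w L' n] by (simp add: m_assoc)
qed

end

fun push :: "(nat \<times> bool) \<Rightarrow> (nat \<times> bool) list \<Rightarrow> (nat \<times> bool) list" where
  "push a [] = [a]"
| "push a (b # w) = (if fst a = fst b \<and> snd a \<noteq> snd b then w else a # b # w)"

definition red :: "(nat \<times> bool) list \<Rightarrow> (nat \<times> bool) list" where
  "red w = foldr push w []"

lemma red_Nil[simp]: "red [] = []" by (simp add: red_def)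
lemma red_Cons[simp]: "red (a # w) = push a (red w)" by (simp add: red_def)

lemma reduced_tl: "reduced_word (b # w) \<Longrightarrow> reduced_word w"
  by (cases w) auto

lemma reduced_push: "reduced_word w \<Longrightarrow> reduced_word (push a w)"
  by (cases w) (auto dest: reduced_tl)

lemma reduced_red: "reduced_word (red w)"
  by (induction w) (auto simp: reduced_push)

lemma set_push: "set (push a w) \<subseteq> insert a (set w)"
  by (cases w) auto

lemma set_red: "set (red w) \<subseteq> set w"
  by (induction w) (use set_push in fastforce)+

definition invw :: "(nat \<times> bool) list \<Rightarrow> (nat \<times> bool) list" where
  "invw w = rev (map (\<lambda>(i,b). (i, \<not> b)) w)"

lemma invw_Cons[simp]: "invw ((i,b) # w) = invw w @ [(i, \<not> b)]" by (simp add: invw_def)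
lemma invw_Nil[simp]: "invw [] = []" by (simp add: invw_def)
lemma fst_invw[simp]: "fst ` set (invw w) = fst ` set w"
  unfolding invw_def by (simp add: image_image case_prod_beta)

context
  fixes G :: "'a monoid" (structure) assumes grpG: "group G"
begin
interpretation group G by (rule grpG)

lemma eval_closed: "x ` I \<subseteq> carrier G \<Longrightarrow> fst ` set w \<subseteq> I \<Longrightarrow> eval_word G x w \<in> carrier G"
proof (induction w)
  case Nil then show ?case by simp
next
  case (Cons a w) then show ?case by (cases a) auto
qed

lemma eval_append: "x ` I \<subseteq> carrier G \<Longrightarrow> fst ` set w \<subseteq> I \<Longrightarrow> fst ` set w' \<subseteq> I \<Longrightarrow>
  eval_word G x (w @ w') = eval_word G x w \<otimes> eval_word G x w'"
proof (induction w)
  case Nil then show ?case using eval_closed[of x I w'] by simp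
next
  case (Cons a w)
  obtain i b where a: "a = (i, b)" by (cases a)
  have xi: "x i \<in> carrier G" using Cons a by auto
  show ?case using Cons a xi eval_closed[of x I w] eval_closed[of x I w'] by (simp add: m_assoc)
qed

lemma eval_push: "x ` I \<subseteq> carrier G \<Longrightarrow> fst ` set (a # w) \<subseteq> I \<Longrightarrow>
  eval_word G x (push a w) = eval_word G x (a # w)"
proof (cases w)
  case Nil then show ?thesis by simp
next
  case (Cons b w')
  assume xI: "x ` I \<subseteq> carrier G" and aw: "fst ` set (a # w) \<subseteq> I"
  obtain i p where a: "a = (i, p)" by (cases a)
  obtain j q where b: "b = (j, q)" by (cases b)
  have xi: "x i \<in> carrier G" "x j \<in> carrier G" using aw xI a b Cons by auto
  have ew: "eval_word G x w' \<in> carrier G" using eval_closed[OF xI, of w'] aw Cons by auto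
  show ?thesis
  proof (cases "i = j \<and> p \<noteq> q")
    case True
    then show ?thesis using a b Cons xi ew
      by (cases p) (auto simp: m_assoc[symmetric])
  next
    case False
    then show ?thesis using a b Cons by simp
  qed
qed

lemma eval_red: "x ` I \<subseteq> carrier G \<Longrightarrow> fst ` set w \<subseteq> I \<Longrightarrow>
  eval_word G x (red w) = eval_word G x w"
proof (induction w)
  case Nil then show ?case by simp
next
  case (Cons a w)
  have s: "fst ` set (a # red w) \<subseteq> I" using Cons set_red[of w] by auto
  have "eval_word G x (red (a # w)) = eval_word G x (a # red w)"
    using eval_push[OF Cons(2) s] by simp
  also have "\<dots> = eval_word G x (a # w)" using Cons by (cases a) auto
  finally show ?case .
qed

lemma eval_invw: "x ` I \<subseteq> carrier G \<Longrightarrow> fst ` set w \<subseteq> I \<Longrightarrow>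
  eval_word G x (invw w) = inv (eval_word G x w)"
proof (induction w)
  case Nil then show ?case by simp
next
  case (Cons a w)
  obtain i b where a: "a = (i, b)" by (cases a)
  have xi: "x i \<in> carrier G" using Cons a by auto
  have ew: "eval_word G x w \<in> carrier G" using eval_closed[of x I w] Cons by auto
  have "eval_word G x (invw (a # w)) = eval_word G x (invw w) \<otimes> eval_word G x [(i, \<not> b)]"
    using a Cons by (simp add: eval_append[of x I])
  then show ?case using Cons a xi ew by (cases b) (auto simp: inv_mult_group)
qed

lemma eval_exists: "g \<in> generate G (x ` I) \<Longrightarrow> x ` I \<subseteq> carrier G \<Longrightarrow>
   \<exists>w. fst ` set w \<subseteq> I \<and> eval_word G x w = g"
proof (induction rule: generate.induct)
  case one
  then show ?case by (intro exI[of _ "[]"]) simp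
next
  case (incl h)
  then obtain i where "i \<in> I" "h = x i" by auto
  then show ?case using incl by (intro exI[of _ "[(i,False)]"]) auto
next
  case (inv h)
  then obtain i where "i \<in> I" "h = x i" by auto
  then show ?case using inv by (intro exI[of _ "[(i,True)]"]) auto
next
  case (eng h1 h2)
  then obtain w1 w2 where "fst ` set w1 \<subseteq> I" "eval_word G x w1 = h1"
     "fst ` set w2 \<subseteq> I" "eval_word G x w2 = h2" by blast
  then show ?case using eng by (intro exI[of _ "w1 @ w2"]) (auto simp: eval_append)
qed

end

lemma free_hom:
  fixes H :: "'b monoid"
  assumes fr: "free_group_on F x I" and gH: "group H" and yI: "y ` I \<subseteq> carrier H"
  shows "\<exists>\<phi>. \<phi> \<in> hom F H \<and> (\<forall>i\<in>I. \<phi> (x i) = y i)"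
proof -
  interpret F: group F using fr free_group_on_def by blast
  interpret H: group H by (rule gH)
  have xI: "x ` I \<subseteq> carrier F" and gen: "generate F (x ` I) = carrier F"
    and free: "\<And>w. w \<noteq> [] \<Longrightarrow> set (map fst w) \<subseteq> I \<Longrightarrow> reduced_word w \<Longrightarrow> eval_word F x w \<noteq> \<one>\<^bsub>F\<^esub>"
    using fr unfolding free_group_on_def by blast+
  have key: "eval_word H y w = eval_word H y w'"
    if w: "fst ` set w \<subseteq> I" and w': "fst ` set w' \<subseteq> I" and e: "eval_word F x w = eval_word F x w'" for w w'
  proof -
    define u where "u = w @ invw w'"
    have uI: "fst ` set u \<subseteq> I" using w w' by (simp add: u_def image_Un)
    have "eval_word F x u = eval_word F x w \<otimes>\<^bsub>F\<^esub> inv\<^bsub>F\<^esub> (eval_word F x w')"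
      using w w' xI by (simp add: u_def eval_append[OF F.is_group] eval_invw[OF F.is_group])
    also have "\<dots> = \<one>\<^bsub>F\<^esub>" using e eval_closed[OF F.is_group, OF xI w'] by simp
    finally have "eval_word F x (red u) = \<one>\<^bsub>F\<^esub>" using eval_red[OF F.is_group, OF xI uI] by simp
    moreover have "set (map fst (red u)) \<subseteq> I" using set_red[of u] uI by auto
    ultimately have "red u = []" using free reduced_red by blast
    then have "\<one>\<^bsub>H\<^esub> = eval_word H y u" using eval_red[OF H.is_group, OF yI uI] by simp
    also have "\<dots> = eval_word H y w \<otimes>\<^bsub>H\<^esub> inv\<^bsub>H\<^esub> (eval_word H y w')"
      using w w' yI by (simp add: u_def eval_append[OF H.is_group] eval_invw[OF H.is_group])
    finally have 1: "eval_word H y w \<otimes>\<^bsub>H\<^esub> inv\<^bsub>H\<^esub> (eval_word H y w') = \<one>\<^bsub>H\<^esub>" by simp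
    have c1: "eval_word H y w \<in> carrier H" "eval_word H y w' \<in> carrier H"
      using eval_closed[OF H.is_group, OF yI] w w' by auto
    have "eval_word H y w = (eval_word H y w \<otimes>\<^bsub>H\<^esub> inv\<^bsub>H\<^esub> (eval_word H y w')) \<otimes>\<^bsub>H\<^esub> eval_word H y w'"
      using c1 by (simp add: H.m_assoc)
    then show ?thesis using 1 c1 by simp
  qed
  define wd where "wd g = (SOME w. fst ` set w \<subseteq> I \<and> eval_word F x w = g)" for g
  define \<phi> where "\<phi> g = eval_word H y (wd g)" for g
  have wd: "fst ` set (wd g) \<subseteq> I \<and> eval_word F x (wd g) = g" if "g \<in> carrier F" for g
  proof -
    have "\<exists>w. fst ` set w \<subseteq> I \<and> eval_word F x w = g"
      using eval_exists[OF F.is_group, of g x I] xI that gen by simp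
    then show ?thesis unfolding wd_def by (rule someI_ex)
  qed
  have phi_eval: "\<phi> (eval_word F x w) = eval_word H y w" if "fst ` set w \<subseteq> I" for w
  proof -
    have "eval_word F x w \<in> carrier F" using eval_closed[OF F.is_group, OF xI that] .
    then have "fst ` set (wd (eval_word F x w)) \<subseteq> I" "eval_word F x (wd (eval_word F x w)) = eval_word F x w"
      using wd by auto
    then show ?thesis unfolding \<phi>_def using key[OF _ that] by blast
  qed
  have "\<phi> \<in> hom F H"
  proof (rule homI)
    fix g assume "g \<in> carrier F"
    then have "fst ` set (wd g) \<subseteq> I" using wd by blast
    then show "\<phi> g \<in> carrier H" unfolding \<phi>_def using eval_closed[OF H.is_group, OF yI] by blast
  next
    fix g h assume g: "g \<in> carrier F" and h: "h \<in> carrier F"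
    have "g \<otimes>\<^bsub>F\<^esub> h = eval_word F x (wd g @ wd h)" using wd[OF g] wd[OF h] xI
      by (simp add: eval_append[OF F.is_group])
    moreover have "fst ` set (wd g @ wd h) \<subseteq> I" using wd[OF g] wd[OF h] by auto
    ultimately have "\<phi> (g \<otimes>\<^bsub>F\<^esub> h) = eval_word H y (wd g @ wd h)" using phi_eval by simp
    also have "\<dots> = \<phi> g \<otimes>\<^bsub>H\<^esub> \<phi> h" unfolding \<phi>_def using wd[OF g] wd[OF h] yI
      by (simp add: eval_append[OF H.is_group])
    finally show "\<phi> (g \<otimes>\<^bsub>F\<^esub> h) = \<phi> g \<otimes>\<^bsub>H\<^esub> \<phi> h" .
  qed
  moreover have "\<phi> (x i) = y i" if "i \<in> I" for i
  proof -
    have 1: "\<phi> (eval_word F x [(i,False)]) = eval_word H y [(i,False)]" by (rule phi_eval) (use that in simp)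
    have 2: "eval_word F x [(i,False)] = x i" using xI that by auto
    have 3: "eval_word H y [(i,False)] = y i" using yI that by auto
    show ?thesis using 1 unfolding 2 3 .
  qed
  ultimately show ?thesis by blast
qed


type_synonym hel = "(nat \<Rightarrow> int) \<times> (nat \<Rightarrow> nat \<Rightarrow> int)"

definition Hgrp :: "hel monoid" where
  "Hgrp = \<lparr>carrier = UNIV,
     monoid.mult = (\<lambda>u v. (\<lambda>i. fst u i + fst v i, \<lambda>i j. snd u i j + snd v i j + fst u i * fst v j)),
     monoid.one = (\<lambda>i. 0, \<lambda>i j. 0)\<rparr>"

lemma Hgrp_carrier[simp]: "carrier Hgrp = UNIV" by (simp add: Hgrp_def)
lemma Hgrp_mult: "u \<otimes>\<^bsub>Hgrp\<^esub> v = (\<lambda>i. fst u i + fst v i, \<lambda>i j. snd u i j + snd v i j + fst u i * fst v j)"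
  by (simp add: Hgrp_def)
lemma Hgrp_one: "\<one>\<^bsub>Hgrp\<^esub> = (\<lambda>i. 0, \<lambda>i j. 0)" by (simp add: Hgrp_def)

lemma Hgrp_group: "group Hgrp"
proof (rule groupI)
  fix u v w :: hel
  show "u \<otimes>\<^bsub>Hgrp\<^esub> v \<otimes>\<^bsub>Hgrp\<^esub> w = u \<otimes>\<^bsub>Hgrp\<^esub> (v \<otimes>\<^bsub>Hgrp\<^esub> w)"
    by (simp add: Hgrp_mult algebra_simps)
next
  fix u :: hel
  show "\<one>\<^bsub>Hgrp\<^esub> \<otimes>\<^bsub>Hgrp\<^esub> u = u" by (simp add: Hgrp_mult Hgrp_one)
  show "\<exists>v\<in>carrier Hgrp. v \<otimes>\<^bsub>Hgrp\<^esub> u = \<one>\<^bsub>Hgrp\<^esub>"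
    by (rule bexI[of _ "(\<lambda>i. - fst u i, \<lambda>i j. - snd u i j + fst u i * fst u j)"])
       (simp_all add: Hgrp_mult Hgrp_one algebra_simps)
qed auto

lemma Hgrp_inv: "inv\<^bsub>Hgrp\<^esub> u = (\<lambda>i. - fst u i, \<lambda>i j. - snd u i j + fst u i * fst u j)"
  by (rule group.inv_equality[OF Hgrp_group]) (simp_all add: Hgrp_mult Hgrp_one algebra_simps)

lemma Hgrp_comm: "inv\<^bsub>Hgrp\<^esub> u \<otimes>\<^bsub>Hgrp\<^esub> inv\<^bsub>Hgrp\<^esub> v \<otimes>\<^bsub>Hgrp\<^esub> u \<otimes>\<^bsub>Hgrp\<^esub> v
   = (\<lambda>i. 0, \<lambda>i j. fst u i * fst v j - fst v i * fst u j)"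
  by (simp add: Hgrp_mult Hgrp_inv algebra_simps)

lemma fst_Hmult: "fst (u \<otimes>\<^bsub>Hgrp\<^esub> v) = (\<lambda>i. fst u i + fst v i)" by (simp add: Hgrp_mult)

lemma fst_Hnpow: "fst (u [^]\<^bsub>Hgrp\<^esub> (n::nat)) = (\<lambda>i. int n * fst u i)"
  by (induction n) (simp_all add: Hgrp_one fst_Hmult algebra_simps)

lemma fst_Hpow: "fst (u [^]\<^bsub>Hgrp\<^esub> (k::int)) = (\<lambda>i. k * fst u i)"
proof -
  have e: "u [^]\<^bsub>Hgrp\<^esub> k = (if k < 0 then inv\<^bsub>Hgrp\<^esub> (u [^]\<^bsub>Hgrp\<^esub> nat (-k)) else u [^]\<^bsub>Hgrp\<^esub> nat k)"
    by (rule int_pow_def2)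
  show ?thesis
  proof (cases "k < 0")
    case True
    then show ?thesis unfolding e by (simp only: if_True Hgrp_inv fst_Hnpow) (use True in simp)
  next
    case False
    then show ?thesis unfolding e by (simp only: if_False fst_Hnpow) (use False in simp)
  qed
qed

lemma Hnpow0: "(\<lambda>i. 0, d) [^]\<^bsub>Hgrp\<^esub> (n::nat) = (\<lambda>i. 0, \<lambda>i j. int n * d i j)"
  by (induction n) (simp_all add: Hgrp_one Hgrp_mult algebra_simps)

lemma Hpow0: "(\<lambda>i. 0, d) [^]\<^bsub>Hgrp\<^esub> (k::int) = (\<lambda>i. 0, \<lambda>i j. k * d i j)"
proof -
  have e: "(\<lambda>i. 0, d) [^]\<^bsub>Hgrp\<^esub> k = (if k < 0 then inv\<^bsub>Hgrp\<^esub> ((\<lambda>i. 0, d) [^]\<^bsub>Hgrp\<^esub> nat (-k)) else (\<lambda>i. 0, d) [^]\<^bsub>Hgrp\<^esub> nat k)"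
    by (rule int_pow_def2)
  show ?thesis
  proof (cases "k < 0")
    case True
    then show ?thesis unfolding e by (simp only: if_True Hgrp_inv Hnpow0) (use True in simp)
  next
    case False
    then show ?thesis unfolding e by (simp only: if_False Hnpow0) (use False in simp)
  qed
qed

lemma lprod_H_fst: "fst (lprod Hgrp w L n) = (\<lambda>i. sum_list (map (\<lambda>l. n l * fst (w l) i) L))"
  by (induction L) (simp_all add: Hgrp_one fst_Hmult fst_Hpow)

lemma lprod_H_snd: "\<forall>l\<in>set L. fst (w l) = (\<lambda>i. 0) \<Longrightarrow>
   lprod Hgrp w L n = (\<lambda>i. 0, \<lambda>i j. sum_list (map (\<lambda>l. n l * snd (w l) i j) L))"
proof (induction L)
  case Nil then show ?case by (simp add: Hgrp_one)
next
  case (Cons a L)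
  have "w a = (\<lambda>i. 0, snd (w a))" using Cons(2) by (metis list.set_intros(1) prod.collapse)
  then have "w a [^]\<^bsub>Hgrp\<^esub> n a = (\<lambda>i. 0, \<lambda>i j. n a * snd (w a) i j)" using Hpow0 by metis
  then show ?case using Cons by (simp add: Hgrp_mult)
qed

lemma lprod_hom: "group G \<Longrightarrow> group K \<Longrightarrow> h \<in> hom G K \<Longrightarrow> w ` set L \<subseteq> carrier G \<Longrightarrow>
   h (lprod G w L n) = lprod K (\<lambda>l. h (w l)) L n"
proof (induction L)
  case Nil then show ?case by (simp add: hom_one)
next
  case (Cons a L)
  have wa: "w a \<in> carrier G" using Cons by auto
  have "h (lprod G w (a # L) n) = h (w a [^]\<^bsub>G\<^esub> n a) \<otimes>\<^bsub>K\<^esub> h (lprod G w L n)"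
    using Cons wa group.lprod_closed[of G w L n] by (simp add: hom_mult group.int_pow_closed)
  then show ?case using Cons wa by (simp add: hom_int_pow)
qed


definition cm :: "'a monoid \<Rightarrow> 'a \<Rightarrow> 'a \<Rightarrow> 'a" where
  "cm G a b = inv\<^bsub>G\<^esub> a \<otimes>\<^bsub>G\<^esub> inv\<^bsub>G\<^esub> b \<otimes>\<^bsub>G\<^esub> a \<otimes>\<^bsub>G\<^esub> b"

lemma comm_subgroup_cm: "comm_subgroup G A B = generate G {cm G a b | a b. a \<in> A \<and> b \<in> B}"
  unfolding comm_subgroup_def cm_def by simp

definition Tset :: "'a monoid \<Rightarrow> 'a set \<Rightarrow> ('i \<Rightarrow> 'a) \<Rightarrow> 'i list \<Rightarrow> 'a set" where
  "Tset G N z L = {a \<in> carrier G. \<exists>n. N #>\<^bsub>G\<^esub> a = lprod (G Mod N) (\<lambda>l. N #>\<^bsub>G\<^esub> z l) L n}"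

context
  fixes G :: "'a monoid" (structure) assumes grpG: "group G"
begin
interpretation group G by (rule grpG)

lemma cancel1[simp]: "x \<in> carrier G \<Longrightarrow> y \<in> carrier G \<Longrightarrow> inv x \<otimes> (x \<otimes> y) = y"
  by (simp add: m_assoc[symmetric])
lemma cancel2[simp]: "x \<in> carrier G \<Longrightarrow> y \<in> carrier G \<Longrightarrow> x \<otimes> (inv x \<otimes> y) = y"
  by (simp add: m_assoc[symmetric])

lemma cm_closed[simp]: "a \<in> carrier G \<Longrightarrow> b \<in> carrier G \<Longrightarrow> cm G a b \<in> carrier G"
  by (simp add: cm_def)

lemma cm_conj: "a \<in> carrier G \<Longrightarrow> b \<in> carrier G \<Longrightarrow> g \<in> carrier G \<Longrightarrow>
  g \<otimes> cm G a b \<otimes> inv g = cm G (g \<otimes> a \<otimes> inv g) (g \<otimes> b \<otimes> inv g)"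
  by (simp add: cm_def m_assoc inv_mult_group)

lemma cm_one_right: "a \<in> carrier G \<Longrightarrow> cm G a \<one> = \<one>"
  by (simp add: cm_def m_assoc)

lemma cm_one_left: "a \<in> carrier G \<Longrightarrow> cm G \<one> a = \<one>"
  by (simp add: cm_def m_assoc)

lemma cm_commute: "a \<in> carrier G \<Longrightarrow> b \<in> carrier G \<Longrightarrow> a \<otimes> b = b \<otimes> a \<Longrightarrow> cm G a b = \<one>"
proof -
  assume a: "a \<in> carrier G" and b: "b \<in> carrier G" and e: "a \<otimes> b = b \<otimes> a"
  have "cm G a b = inv a \<otimes> (inv b \<otimes> (a \<otimes> b))" using a b by (simp add: cm_def m_assoc)
  also have "\<dots> = inv a \<otimes> (inv b \<otimes> (b \<otimes> a))" using e by simp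
  also have "\<dots> = \<one>" using a b by simp
  finally show ?thesis .
qed

lemma cm_swap: "a \<in> carrier G \<Longrightarrow> b \<in> carrier G \<Longrightarrow> cm G a b \<otimes> cm G b a = \<one>"
  by (simp add: cm_def m_assoc)

lemma cm_mult_right: "s \<in> carrier G \<Longrightarrow> f \<in> carrier G \<Longrightarrow> f' \<in> carrier G \<Longrightarrow>
  cm G s (f \<otimes> f') = cm G s f' \<otimes> (inv f' \<otimes> cm G s f \<otimes> f')"
  by (simp add: cm_def m_assoc inv_mult_group)

lemma cm_inv_right: "s \<in> carrier G \<Longrightarrow> f \<in> carrier G \<Longrightarrow>
  cm G s (inv f) = inv (f \<otimes> cm G s f \<otimes> inv f)"
  by (simp add: cm_def m_assoc inv_mult_group)

lemma cm_mult_left: "s \<in> carrier G \<Longrightarrow> s' \<in> carrier G \<Longrightarrow> f \<in> carrier G \<Longrightarrow>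
  cm G (s \<otimes> s') f = (inv s' \<otimes> cm G s f \<otimes> s') \<otimes> cm G s' f"
  by (simp add: cm_def m_assoc inv_mult_group)

lemma cm_inv_left: "s \<in> carrier G \<Longrightarrow> f \<in> carrier G \<Longrightarrow>
  cm G (inv s) f = inv (s \<otimes> cm G s f \<otimes> inv s)"
  by (simp add: cm_def m_assoc inv_mult_group)

lemma cm_conj_left: "y \<in> carrier G \<Longrightarrow> f \<in> carrier G \<Longrightarrow> g \<in> carrier G \<Longrightarrow>
  cm G (g \<otimes> y \<otimes> inv g) f = g \<otimes> cm G y (inv g \<otimes> f \<otimes> g) \<otimes> inv g"
  by (simp add: cm_def m_assoc inv_mult_group)

lemma cm_swap_mult: "z \<in> carrier G \<Longrightarrow> g \<in> carrier G \<Longrightarrow> z \<otimes> g = g \<otimes> z \<otimes> cm G z g"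
  by (simp add: cm_def m_assoc)

lemma generate_normal:
  assumes Xs: "Xs \<subseteq> carrier G" and cc: "\<And>x g. x \<in> Xs \<Longrightarrow> g \<in> carrier G \<Longrightarrow> g \<otimes> x \<otimes> inv g \<in> Xs"
  shows "generate G Xs \<lhd> G"
  unfolding normal_inv_iff
proof (intro conjI ballI)
  show "subgroup (generate G Xs) G" by (rule generate_is_subgroup[OF Xs])
next
  fix g h assume g: "g \<in> carrier G" and h: "h \<in> generate G Xs"
  from h show "g \<otimes> h \<otimes> inv g \<in> generate G Xs"
  proof (induction rule: generate.induct)
    case one then show ?case using g by (simp add: generate.one)
  next
    case (incl h) then show ?case using cc g by (simp add: generate.incl)
  next
    case (inv h)
    have hc: "h \<in> carrier G" using inv Xs by auto
    have "g \<otimes> inv h \<otimes> inv g = inv (g \<otimes> h \<otimes> inv g)" using g hc by (simp add: m_assoc inv_mult_group)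
    then show ?case using cc[OF inv g] generate.inv by metis
  next
    case (eng h1 h2)
    have c: "h1 \<in> carrier G" "h2 \<in> carrier G" using eng generate_in_carrier[OF Xs] by auto
    have "g \<otimes> (h1 \<otimes> h2) \<otimes> inv g = (g \<otimes> h1 \<otimes> inv g) \<otimes> (g \<otimes> h2 \<otimes> inv g)"
      using c g by (simp add: m_assoc)
    then show ?case using eng generate.eng by metis
  qed
qed

lemma comm_subgroup_normal:
  assumes A: "A \<subseteq> carrier G" and cc: "\<And>a g. a \<in> A \<Longrightarrow> g \<in> carrier G \<Longrightarrow> g \<otimes> a \<otimes> inv g \<in> A"
  shows "comm_subgroup G A (carrier G) \<lhd> G"
  unfolding comm_subgroup_cm
proof (rule generate_normal)
  show "{cm G a b |a b. a \<in> A \<and> b \<in> carrier G} \<subseteq> carrier G" using A by auto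
next
  fix x g assume "x \<in> {cm G a b |a b. a \<in> A \<and> b \<in> carrier G}" and g: "g \<in> carrier G"
  then obtain a b where x: "x = cm G a b" and a: "a \<in> A" and b: "b \<in> carrier G" by blast
  have "g \<otimes> x \<otimes> inv g = cm G (g \<otimes> a \<otimes> inv g) (g \<otimes> b \<otimes> inv g)"
    using x a b g A cm_conj by auto
  then show "g \<otimes> x \<otimes> inv g \<in> {cm G a b |a b. a \<in> A \<and> b \<in> carrier G}"
    using cc[OF a g] b g by auto
qed

lemma comm_subgroup_le:
  assumes "A \<lhd> G" shows "comm_subgroup G A (carrier G) \<subseteq> A"
  unfolding comm_subgroup_cm
proof (rule generate_subgroup_incl)
  show "subgroup A G" using assms normal_imp_subgroup by blast
  show "{cm G a b |a b. a \<in> A \<and> b \<in> carrier G} \<subseteq> A"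
  proof safe
    fix a b assume a: "a \<in> A" and b: "b \<in> carrier G"
    have sA: "subgroup A G" using assms normal_imp_subgroup by blast
    have ac: "a \<in> carrier G" using subgroup.subset[OF sA] a by blast
    have "\<forall>x\<in>carrier G. \<forall>h\<in>A. x \<otimes> h \<otimes> inv x \<in> A" using assms normal_inv_iff by blast
    then have "inv b \<otimes> a \<otimes> inv (inv b) \<in> A" using a inv_closed[OF b] by blast
    then have "inv b \<otimes> a \<otimes> b \<in> A" using b by simp
    moreover have "inv a \<in> A" using subgroup.m_inv_closed[OF sA a] .
    ultimately have "inv a \<otimes> (inv b \<otimes> a \<otimes> b) \<in> A"
      using subgroup.m_closed[OF sA] by blast
    then show "cm G a b \<in> A" using ac b by (simp add: cm_def m_assoc)
  qed
qed

lemma comm_subgroup_mono: "A \<subseteq> A' \<Longrightarrow> comm_subgroup G A B \<subseteq> comm_subgroup G A' B"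
  unfolding comm_subgroup_cm by (rule mono_generate) blast

lemma cm_in_comm: "a \<in> A \<Longrightarrow> b \<in> B \<Longrightarrow> cm G a b \<in> comm_subgroup G A B"
  unfolding comm_subgroup_cm by (rule generate.incl) blast

lemma Qmult: "N \<lhd> G \<Longrightarrow> a \<in> carrier G \<Longrightarrow> b \<in> carrier G \<Longrightarrow>
  (N #> a) \<otimes>\<^bsub>G Mod N\<^esub> (N #> b) = N #> (a \<otimes> b)"
  unfolding FactGroup_def by (simp add: normal.rcos_sum)

lemma Qone: "\<one>\<^bsub>G Mod N\<^esub> = N" unfolding FactGroup_def by simp

lemma Qcarrier: "q \<in> carrier (G Mod N) \<Longrightarrow> \<exists>g\<in>carrier G. q = N #> g"
  unfolding FactGroup_def RCOSETS_def by auto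

lemma Qin: "N \<lhd> G \<Longrightarrow> a \<in> carrier G \<Longrightarrow> N #> a \<in> carrier (G Mod N)"
  unfolding FactGroup_def RCOSETS_def by auto

lemma Qinv: "N \<lhd> G \<Longrightarrow> a \<in> carrier G \<Longrightarrow> inv\<^bsub>G Mod N\<^esub> (N #> a) = N #> inv a"
proof -
  assume N: "N \<lhd> G" and a: "a \<in> carrier G"
  interpret Q: group "G Mod N" using N normal.factorgroup_is_group by blast
  have "(N #> inv a) \<otimes>\<^bsub>G Mod N\<^esub> (N #> a) = N #> \<one>" using Qmult[OF N inv_closed[OF a] a] a by simp
  also have "N #> \<one> = \<one>\<^bsub>G Mod N\<^esub>" unfolding Qone
    using coset_join2[OF one_closed normal_imp_subgroup[OF N] subgroup.one_closed[OF normal_imp_subgroup[OF N]]] .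
  finally show ?thesis using Q.inv_equality Qin[OF N a] Qin[OF N inv_closed[OF a]] by blast
qed

lemma Qkernel: "N \<lhd> G \<Longrightarrow> a \<in> carrier G \<Longrightarrow> (N #> a = N) = (a \<in> N)"
proof -
  assume N: "N \<lhd> G" and a: "a \<in> carrier G"
  have sN: "subgroup N G" using N by (rule normal_imp_subgroup)
  show ?thesis using coset_join1[OF _ a sN] coset_join2[OF a sN] by blast
qed

lemma central_mod:
  assumes N: "N \<lhd> G" and z: "z \<in> carrier G" and c: "\<forall>g\<in>carrier G. cm G z g \<in> N"
  shows "group.central (G Mod N) (N #> z)"
proof -
  interpret Q: group "G Mod N" using N normal.factorgroup_is_group by blast
  have "(N #> z) \<otimes>\<^bsub>G Mod N\<^esub> q = q \<otimes>\<^bsub>G Mod N\<^esub> (N #> z)" if q: "q \<in> carrier (G Mod N)" for q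
  proof -
    obtain g where g: "g \<in> carrier G" and qg: "q = N #> g" using Qcarrier[OF q] by blast
    have cN: "N #> cm G z g = N" using Qkernel[OF N cm_closed[OF z g]] c g by blast
    have "(N #> z) \<otimes>\<^bsub>G Mod N\<^esub> (N #> g) = N #> (z \<otimes> g)" using Qmult[OF N z g] .
    also have "\<dots> = N #> (g \<otimes> z \<otimes> cm G z g)" using cm_swap_mult[OF z g] by (rule arg_cong)
    also have "\<dots> = (N #> (g \<otimes> z)) \<otimes>\<^bsub>G Mod N\<^esub> (N #> cm G z g)"
      using Qmult[OF N m_closed[OF g z] cm_closed[OF z g]] by (rule sym)
    also have "\<dots> = N #> (g \<otimes> z)" unfolding cN
      using Q.r_one[OF Qin[OF N m_closed[OF g z]]] unfolding Qone .
    also have "\<dots> = (N #> g) \<otimes>\<^bsub>G Mod N\<^esub> (N #> z)" using Qmult[OF N g z] by (rule sym)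
    finally show ?thesis unfolding qg .
  qed
  moreover have "N #> z \<in> carrier (G Mod N)" using Qin[OF N z] .
  ultimately show ?thesis unfolding Q.central_def by blast
qed

end

context
  fixes G :: "'a monoid" (structure) and N :: "'a set" and z :: "'i \<Rightarrow> 'a" and L :: "'i list"
  assumes grpG: "group G" and NG: "N \<lhd> G" and dL: "distinct L" and zL: "z ` set L \<subseteq> carrier G"
    and zc: "\<forall>l\<in>set L. \<forall>g\<in>carrier G. cm G (z l) g \<in> N"
begin
interpretation group G by (rule grpG)
interpretation Q: group "G Mod N" using NG normal.factorgroup_is_group by blast

lemma wcentral: "\<forall>l\<in>set L. Q.central (N #> z l)"
  using central_mod[OF grpG NG] zL zc by blast

lemma wcarrier: "(\<lambda>l. N #> z l) ` set L \<subseteq> carrier (G Mod N)"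
  using Qin[OF grpG NG] zL by blast

lemma T_lprod_hom: "N #> lprod G z L n = lprod (G Mod N) (\<lambda>l. N #> z l) L n"
  using lprod_hom[OF grpG Q.is_group normal.r_coset_hom_Mod[OF NG] zL] by simp

lemma T_sub: "subgroup (Tset G N z L) G"
proof (rule subgroupI)
  show "Tset G N z L \<subseteq> carrier G" unfolding Tset_def by blast
next
  have "N #> \<one> = lprod (G Mod N) (\<lambda>l. N #> z l) L (\<lambda>l. 0)"
    using Q.lprod_zero[OF _ wcarrier] Qone coset_join2[OF one_closed normal_imp_subgroup[OF NG]]
      subgroup.one_closed[OF normal_imp_subgroup[OF NG]] by simp
  then have "\<one> \<in> Tset G N z L" unfolding Tset_def by blast
  then show "Tset G N z L \<noteq> {}" by blast
next
  fix a assume "a \<in> Tset G N z L"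
  then obtain n where a: "a \<in> carrier G" and an: "N #> a = lprod (G Mod N) (\<lambda>l. N #> z l) L n"
    unfolding Tset_def by blast
  have "N #> inv a = inv\<^bsub>G Mod N\<^esub> (N #> a)"
    using group_hom.hom_inv[of G "G Mod N" "\<lambda>a. N #> a" a] normal.r_coset_hom_Mod[OF NG] a
      grpG Q.is_group unfolding group_hom_def group_hom_axioms_def by simp
  also have "\<dots> = lprod (G Mod N) (\<lambda>l. N #> z l) L (\<lambda>l. - n l)"
    unfolding an using Q.lprod_neg[OF wcentral] by simp
  finally show "inv a \<in> Tset G N z L" unfolding Tset_def using a by blast
next
  fix a b assume "a \<in> Tset G N z L" "b \<in> Tset G N z L"
  then obtain n m where a: "a \<in> carrier G" and an: "N #> a = lprod (G Mod N) (\<lambda>l. N #> z l) L n"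
    and b: "b \<in> carrier G" and bm: "N #> b = lprod (G Mod N) (\<lambda>l. N #> z l) L m"
    unfolding Tset_def by blast
  have "N #> (a \<otimes> b) = (N #> a) \<otimes>\<^bsub>G Mod N\<^esub> (N #> b)" using Qmult[OF grpG NG a b] by simp
  also have "\<dots> = lprod (G Mod N) (\<lambda>l. N #> z l) L (\<lambda>l. n l + m l)"
    unfolding an bm by (rule Q.lprod_add[OF wcentral])
  finally show "a \<otimes> b \<in> Tset G N z L" unfolding Tset_def using a b by blast
qed

lemma T_gen: "l \<in> set L \<Longrightarrow> z l \<in> Tset G N z L"
  unfolding Tset_def using zL Q.lprod_delta[OF dL _ wcarrier, of l] by auto

lemma T_conj: "a \<in> Tset G N z L \<Longrightarrow> g \<in> carrier G \<Longrightarrow> g \<otimes> a \<otimes> inv g \<in> Tset G N z L"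
proof -
  assume "a \<in> Tset G N z L" and g: "g \<in> carrier G"
  then obtain n where a: "a \<in> carrier G" and an: "N #> a = lprod (G Mod N) (\<lambda>l. N #> z l) L n"
    unfolding Tset_def by blast
  let ?P = "lprod (G Mod N) (\<lambda>l. N #> z l) L n"
  have cP: "Q.central ?P" using Q.lprod_central[OF wcentral] .
  have gQ: "N #> g \<in> carrier (G Mod N)" "N #> inv g \<in> carrier (G Mod N)"
    using Qin[OF grpG NG] g by auto
  have "N #> (g \<otimes> a \<otimes> inv g) = (N #> g) \<otimes>\<^bsub>G Mod N\<^esub> (N #> a) \<otimes>\<^bsub>G Mod N\<^esub> (N #> inv g)"
    using Qmult[OF grpG NG] g a by simp
  also have "\<dots> = (N #> g) \<otimes>\<^bsub>G Mod N\<^esub> (N #> inv g) \<otimes>\<^bsub>G Mod N\<^esub> ?P"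
  proof -
    have Pc: "?P \<in> carrier (G Mod N)" using cP Q.central_def by blast
    have com: "?P \<otimes>\<^bsub>G Mod N\<^esub> (N #> inv g) = (N #> inv g) \<otimes>\<^bsub>G Mod N\<^esub> ?P"
      using cP gQ(2) unfolding Q.central_def by blast
    have "(N #> g) \<otimes>\<^bsub>G Mod N\<^esub> ?P \<otimes>\<^bsub>G Mod N\<^esub> (N #> inv g)
        = (N #> g) \<otimes>\<^bsub>G Mod N\<^esub> (?P \<otimes>\<^bsub>G Mod N\<^esub> (N #> inv g))"
      by (rule Q.m_assoc[OF gQ(1) Pc gQ(2)])
    also have "\<dots> = (N #> g) \<otimes>\<^bsub>G Mod N\<^esub> ((N #> inv g) \<otimes>\<^bsub>G Mod N\<^esub> ?P)" unfolding com ..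
    also have "\<dots> = (N #> g) \<otimes>\<^bsub>G Mod N\<^esub> (N #> inv g) \<otimes>\<^bsub>G Mod N\<^esub> ?P"
      by (rule Q.m_assoc[OF gQ(1) gQ(2) Pc, symmetric])
    finally show ?thesis unfolding an .
  qed
  also have "(N #> g) \<otimes>\<^bsub>G Mod N\<^esub> (N #> inv g) = \<one>\<^bsub>G Mod N\<^esub>"
    using Qmult[OF grpG NG] g Qone coset_join2[OF one_closed normal_imp_subgroup[OF NG]]
      subgroup.one_closed[OF normal_imp_subgroup[OF NG]] by simp
  also have "\<one>\<^bsub>G Mod N\<^esub> \<otimes>\<^bsub>G Mod N\<^esub> ?P = ?P"
    by (rule Q.l_one) (use cP Q.central_def in blast)
  finally show ?thesis unfolding Tset_def using a g by blast
qed

lemma T_elim: "a \<in> Tset G N z L \<Longrightarrow>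
  \<exists>n. N #> a = lprod (G Mod N) (\<lambda>l. N #> z l) L n \<and> (\<exists>k\<in>N. a = k \<otimes> lprod G z L n)"
proof -
  assume "a \<in> Tset G N z L"
  then obtain n where a: "a \<in> carrier G" and an: "N #> a = lprod (G Mod N) (\<lambda>l. N #> z l) L n"
    unfolding Tset_def by blast
  have "a \<in> N #> a" using rcos_self[OF a normal_imp_subgroup[OF NG]] .
  then have "a \<in> N #> lprod G z L n" using an T_lprod_hom by simp
  then obtain k where "k \<in> N" "a = k \<otimes> lprod G z L n" unfolding r_coset_def by blast
  then show ?thesis using an by blast
qed

end


lemma sum_delta_list: "distinct L \<Longrightarrow>
  sum_list (map (\<lambda>l. if l = a then f l else (0::int)) L) = (if a \<in> set L then f a else 0)"
  by (induction L) auto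

definition blk :: "nat \<times> nat \<Rightarrow> (nat \<times> nat) list" where
  "blk p = [p, (snd p, fst p)]"

lemma distinct_blocks: "distinct ps \<Longrightarrow> \<forall>p\<in>set ps. fst p < snd p \<Longrightarrow> distinct (concat (map blk ps))"
proof (induction ps)
  case Nil then show ?case by simp
next
  case (Cons p ps)
  obtain a b where p: "p = (a, b)" by (cases p)
  have ab: "a < b" using Cons p by auto
  have nin: "(a, b) \<notin> set (concat (map blk ps))" "(b, a) \<notin> set (concat (map blk ps))"
    using Cons p ab by (auto simp: blk_def)
  show ?case using Cons p ab nin by (auto simp: blk_def)
qed

lemma set_blocks: "set (concat (map blk ps)) = set ps \<union> (\<lambda>p. (snd p, fst p)) ` set ps"
  by (induction ps) (auto simp: blk_def)

lemma block_sum: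
  fixes n :: "nat \<times> nat \<Rightarrow> int" and rr :: "nat \<Rightarrow> int" and D :: "nat \<times> nat \<Rightarrow> int"
  assumes "distinct ps"
    and "\<forall>p\<in>set ps. D p = (if p = (i, j) then rr i else 0) \<and>
                      D (snd p, fst p) = (if p = (i, j) then - rr j else 0)"
  shows "sum_list (map (\<lambda>l. n l * D l) (concat (map blk ps)))
         = (if (i, j) \<in> set ps then n (i, j) * rr i - n (j, i) * rr j else 0)"
  using assms
proof (induction ps)
  case Nil then show ?case by simp
next
  case (Cons p ps)
  obtain a b where p: "p = (a, b)" by (cases p)
  have IH: "sum_list (map (\<lambda>l. n l * D l) (concat (map blk ps)))
         = (if (i, j) \<in> set ps then n (i, j) * rr i - n (j, i) * rr j else 0)"
    using Cons by auto
  have Dp: "D (a, b) = (if (a, b) = (i, j) then rr i else 0)" "D (b, a) = (if (a, b) = (i, j) then - rr j else 0)"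
    using Cons(3) p by auto
  have "sum_list (map (\<lambda>l. n l * D l) (concat (map blk (p # ps))))
     = (n (a, b) * D (a, b) + n (b, a) * D (b, a)) + sum_list (map (\<lambda>l. n l * D l) (concat (map blk ps)))"
    using p by (simp add: blk_def)
  also have "\<dots> = (if (i, j) \<in> set (p # ps) then n (i, j) * rr i - n (j, i) * rr j else 0)"
    unfolding IH Dp using Cons(2) p by auto
  finally show ?case .
qed

context
  fixes G :: "'a monoid" (structure) assumes grpG: "group G"
begin
interpretation group G by (rule grpG)

lemma lprod_blocks: "w ` set (concat (map blk ps)) \<subseteq> carrier G \<Longrightarrow>
  (\<forall>p\<in>set ps. lprod G w (blk p) n = \<one>) \<Longrightarrow> lprod G w (concat (map blk ps)) n = \<one>"
proof (induction ps)
  case Nil then show ?case by simp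
next
  case (Cons p ps)
  have "lprod G w (concat (map blk (p # ps))) n = lprod G w (blk p) n \<otimes> lprod G w (concat (map blk ps)) n"
  proof -
    have c1: "w ` set (blk p) \<subseteq> carrier G" and c2: "w ` set (concat (map blk ps)) \<subseteq> carrier G"
      using Cons(2) by auto
    show ?thesis using lprod_append[OF c1 c2, of n] by simp
  qed
  moreover have "lprod G w (concat (map blk ps)) n = \<one>" using Cons by auto
  moreover have "lprod G w (blk p) n = \<one>" using Cons by auto
  ultimately show ?case by simp
qed

lemma central_conj: "central c \<Longrightarrow> q \<in> carrier G \<Longrightarrow> inv q \<otimes> c \<otimes> q = c"
proof -
  assume c: "central c" and q: "q \<in> carrier G"
  have cc: "c \<in> carrier G" using c central_def by blast
  have "inv q \<otimes> c \<otimes> q = inv q \<otimes> (c \<otimes> q)" using cc q by (simp add: m_assoc)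
  also have "c \<otimes> q = q \<otimes> c" using c q central_def by blast
  also have "inv q \<otimes> (q \<otimes> c) = c" using cc q by simp
  finally show ?thesis .
qed

end


theorem corollary2p2:
  fixes F :: "'a monoid" and x :: "nat \<Rightarrow> 'a" and t :: nat and r :: "nat \<Rightarrow> nat" and S :: "'a set"
  assumes "t \<ge> 1"
    and "\<forall>i \<in> {1..t}. r i > 0"
    and "\<forall>i \<in> {1..t}. \<forall>j \<in> {1..t}. i \<noteq> j \<longrightarrow> gcd (r i) (r j) = 1"
    and "free_group_on F x {1..t}"
    and "S = normal_closure F {x i [^]\<^bsub>F\<^esub> r i | i. i \<in> {1..t}}"
  shows "S \<inter> lower_central F 2 = rho F S 2 \<and>
         S \<inter> lower_central F 3 = rho F S 3 \<and>
         rho F S 2 \<inter> lower_central F 3 = rho F S 3"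
proof -
  define I where "I = {1..t}"
  have fr: "free_group_on F x I" using assms(4) I_def by simp
  interpret F: group F using fr free_group_on_def by blast
  have Fg: "group F" by (rule F.is_group)
  have xI: "x ` I \<subseteq> carrier F" and gen: "generate F (x ` I) = carrier F"
    using fr unfolding free_group_on_def by blast+
  define y where "y i = x i [^]\<^bsub>F\<^esub> r i" for i
  have yc: "y i \<in> carrier F" if "i \<in> I" for i using xI that y_def by auto
  define Ys where "Ys = {g \<otimes>\<^bsub>F\<^esub> s \<otimes>\<^bsub>F\<^esub> inv\<^bsub>F\<^esub> g | g s. g \<in> carrier F \<and> s \<in> {x i [^]\<^bsub>F\<^esub> r i | i. i \<in> I}}"
  have S: "S = generate F Ys" using assms(5) unfolding Ys_def normal_closure_def I_def by simp
  have Ysc: "Ys \<subseteq> carrier F" unfolding Ys_def using xI by auto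
  have Ys_iff: "h \<in> Ys \<longleftrightarrow> (\<exists>g i. g \<in> carrier F \<and> i \<in> I \<and> h = g \<otimes>\<^bsub>F\<^esub> y i \<otimes>\<^bsub>F\<^esub> inv\<^bsub>F\<^esub> g)" for h
    unfolding Ys_def y_def by blast
  have Ycc: "g \<otimes>\<^bsub>F\<^esub> h \<otimes>\<^bsub>F\<^esub> inv\<^bsub>F\<^esub> g \<in> Ys" if h: "h \<in> Ys" and g: "g \<in> carrier F" for h g
  proof -
    obtain g' i where g': "g' \<in> carrier F" and i: "i \<in> I" and hg: "h = g' \<otimes>\<^bsub>F\<^esub> y i \<otimes>\<^bsub>F\<^esub> inv\<^bsub>F\<^esub> g'"
      using h Ys_iff by blast
    have "g \<otimes>\<^bsub>F\<^esub> h \<otimes>\<^bsub>F\<^esub> inv\<^bsub>F\<^esub> g = (g \<otimes>\<^bsub>F\<^esub> g') \<otimes>\<^bsub>F\<^esub> y i \<otimes>\<^bsub>F\<^esub> inv\<^bsub>F\<^esub> (g \<otimes>\<^bsub>F\<^esub> g')"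
      using g g' yc[OF i] hg by (simp add: F.m_assoc F.inv_mult_group)
    moreover have "g \<otimes>\<^bsub>F\<^esub> g' \<in> carrier F" using g g' by simp
    ultimately show ?thesis unfolding Ys_iff using i by blast
  qed
  have SN: "S \<lhd> F" unfolding S by (rule generate_normal[OF Fg Ysc Ycc])
  have Sc: "S \<subseteq> carrier F" using SN normal_imp_subgroup subgroup.subset by blast
  have yS: "y i \<in> S" if i: "i \<in> I" for i
  proof -
    have "\<one>\<^bsub>F\<^esub> \<otimes>\<^bsub>F\<^esub> y i \<otimes>\<^bsub>F\<^esub> inv\<^bsub>F\<^esub> \<one>\<^bsub>F\<^esub> \<in> Ys" unfolding Ys_iff using i F.one_closed by blast
    then have "y i \<in> Ys" using yc[OF i] by simp
    then show ?thesis unfolding S by (rule generate.incl)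
  qed
  have S_cc: "g \<otimes>\<^bsub>F\<^esub> a \<otimes>\<^bsub>F\<^esub> inv\<^bsub>F\<^esub> g \<in> S" if "a \<in> S" "g \<in> carrier F" for a g
    using SN that F.normal_inv_iff by blast
  define R2 where "R2 = comm_subgroup F S (carrier F)"
  define R3 where "R3 = comm_subgroup F R2 (carrier F)"
  define G2 where "G2 = comm_subgroup F (carrier F) (carrier F)"
  define G3 where "G3 = comm_subgroup F G2 (carrier F)"
  have rho2: "rho F S 2 = R2" unfolding R2_def by (simp add: numeral_2_eq_2)
  have rho3: "rho F S 3 = R3" unfolding R3_def R2_def by (simp add: numeral_3_eq_3)
  have lc2: "lower_central F 2 = G2" unfolding G2_def by (simp add: numeral_2_eq_2)
  have lc3: "lower_central F 3 = G3" unfolding G3_def G2_def by (simp add: numeral_3_eq_3)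
  have R2N: "R2 \<lhd> F" unfolding R2_def by (rule comm_subgroup_normal[OF Fg Sc S_cc])
  have G2N: "G2 \<lhd> F" unfolding G2_def by (rule comm_subgroup_normal[OF Fg]) auto
  have R2c: "R2 \<subseteq> carrier F" using R2N normal_imp_subgroup subgroup.subset by blast
  have G2c: "G2 \<subseteq> carrier F" using G2N normal_imp_subgroup subgroup.subset by blast
  have R3N: "R3 \<lhd> F" unfolding R3_def
    by (rule comm_subgroup_normal[OF Fg R2c]) (use R2N F.normal_inv_iff in blast)
  have G3N: "G3 \<lhd> F" unfolding G3_def
    by (rule comm_subgroup_normal[OF Fg G2c]) (use G2N F.normal_inv_iff in blast)
  have R2S: "R2 \<subseteq> S" unfolding R2_def by (rule comm_subgroup_le[OF Fg SN])
  have R3R2: "R3 \<subseteq> R2" unfolding R3_def by (rule comm_subgroup_le[OF Fg R2N])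
  have G3G2: "G3 \<subseteq> G2" unfolding G3_def by (rule comm_subgroup_le[OF Fg G2N])
  have R2G2: "R2 \<subseteq> G2" unfolding R2_def G2_def by (rule comm_subgroup_mono[OF Fg Sc])
  have R3G3: "R3 \<subseteq> G3" unfolding R3_def G3_def by (rule comm_subgroup_mono[OF Fg R2G2])
  define ex where "ex i = (\<lambda>k. if k = i then (1::int) else 0)" for i :: nat
  obtain \<phi> where \<phi>hom: "\<phi> \<in> hom F Hgrp" and \<phi>x: "\<forall>i\<in>I. \<phi> (x i) = (ex i, \<lambda>p q. 0)"
    using free_hom[OF fr Hgrp_group, of "\<lambda>i. (ex i, \<lambda>p q. 0)"] by auto
  interpret \<phi>: group_hom F Hgrp \<phi>
    unfolding group_hom_def group_hom_axioms_def using Fg Hgrp_group \<phi>hom by blast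
  have \<phi>cm: "\<phi> (cm F a b) = (\<lambda>i. 0, \<lambda>i j. fst (\<phi> a) i * fst (\<phi> b) j - fst (\<phi> b) i * fst (\<phi> a) j)"
    if a: "a \<in> carrier F" and b: "b \<in> carrier F" for a b
  proof -
    have "\<phi> (cm F a b) = inv\<^bsub>Hgrp\<^esub> (\<phi> a) \<otimes>\<^bsub>Hgrp\<^esub> inv\<^bsub>Hgrp\<^esub> (\<phi> b) \<otimes>\<^bsub>Hgrp\<^esub> \<phi> a \<otimes>\<^bsub>Hgrp\<^esub> \<phi> b"
      unfolding cm_def using a b by simp
    then show ?thesis using Hgrp_comm by simp
  qed
  have \<phi>G2: "fst (\<phi> g) = (\<lambda>i. 0)" if g: "g \<in> G2" for g
  proof -
    define K1 where "K1 = {g \<in> carrier F. fst (\<phi> g) = (\<lambda>i. 0)}"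
    have "subgroup K1 F"
    proof (rule F.subgroupI)
      show "K1 \<subseteq> carrier F" unfolding K1_def by blast
      have "fst (\<phi> \<one>\<^bsub>F\<^esub>) = (\<lambda>i. 0)" by (simp add: Hgrp_one)
      then show "K1 \<noteq> {}" unfolding K1_def by blast
    next
      fix a assume "a \<in> K1"
      then show "inv\<^bsub>F\<^esub> a \<in> K1" unfolding K1_def by (auto simp: Hgrp_inv)
    next
      fix a b assume "a \<in> K1" "b \<in> K1"
      then show "a \<otimes>\<^bsub>F\<^esub> b \<in> K1" unfolding K1_def by (auto simp: fst_Hmult)
    qed
    moreover have "{cm F a b |a b. a \<in> carrier F \<and> b \<in> carrier F} \<subseteq> K1"
      unfolding K1_def using \<phi>cm by auto
    ultimately have "G2 \<subseteq> K1" unfolding G2_def comm_subgroup_cm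
      by (intro F.generate_subgroup_incl)
    then show ?thesis using g K1_def by blast
  qed
  have \<phi>G3: "\<phi> g = \<one>\<^bsub>Hgrp\<^esub>" if g: "g \<in> G3" for g
  proof -
    have "{cm F a b |a b. a \<in> G2 \<and> b \<in> carrier F} \<subseteq> kernel F Hgrp \<phi>"
    proof safe
      fix a b assume a: "a \<in> G2" and b: "b \<in> carrier F"
      have ac: "a \<in> carrier F" using a G2c by blast
      have "\<phi> (cm F a b) = \<one>\<^bsub>Hgrp\<^esub>" using \<phi>cm[OF ac b] \<phi>G2[OF a] by (simp add: Hgrp_one)
      then show "cm F a b \<in> kernel F Hgrp \<phi>" unfolding kernel_def using ac b by simp
    qed
    then have "G3 \<subseteq> kernel F Hgrp \<phi>" unfolding G3_def comm_subgroup_cm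
      by (intro F.generate_subgroup_incl \<phi>.subgroup_kernel)
    then show ?thesis using g unfolding kernel_def by blast
  qed
  have \<phi>y: "fst (\<phi> (y i)) = (\<lambda>k. int (r i) * ex i k)" if i: "i \<in> I" for i
  proof -
    have "x i \<in> carrier F" using xI i by auto
    then have "\<phi> (y i) = \<phi> (x i) [^]\<^bsub>Hgrp\<^esub> r i" unfolding y_def by (rule \<phi>.hom_nat_pow)
    then show ?thesis using \<phi>x i by (simp add: fst_Hnpow)
  qed
  have claim1: "s \<in> R2" if sS: "s \<in> S" and sG: "s \<in> G2" for s
  proof -
    define L1 where "L1 = [1..<t+1]"
    have L1I: "set L1 = I" unfolding L1_def I_def by auto
    have dL1: "distinct L1" unfolding L1_def by simp
    have yL1: "y ` set L1 \<subseteq> carrier F" using yc L1I by auto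
    have yc1: "\<forall>l\<in>set L1. \<forall>g\<in>carrier F. cm F (y l) g \<in> R2"
      unfolding R2_def using yS L1I cm_in_comm[OF Fg] by blast
    have T1: "subgroup (Tset F R2 y L1) F" by (rule T_sub[OF Fg R2N dL1 yL1 yc1])
    have "Ys \<subseteq> Tset F R2 y L1"
    proof
      fix h assume "h \<in> Ys"
      then obtain g i where g: "g \<in> carrier F" and i: "i \<in> I" and h: "h = g \<otimes>\<^bsub>F\<^esub> y i \<otimes>\<^bsub>F\<^esub> inv\<^bsub>F\<^esub> g"
        using Ys_iff by blast
      have "y i \<in> Tset F R2 y L1" using T_gen[OF Fg R2N dL1 yL1 yc1] i L1I by blast
      then show "h \<in> Tset F R2 y L1" unfolding h using T_conj[OF Fg R2N dL1 yL1 yc1] g by blast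
    qed
    then have "S \<subseteq> Tset F R2 y L1" unfolding S by (rule F.generate_subgroup_incl[OF _ T1])
    then have "s \<in> Tset F R2 y L1" using sS by blast
    then obtain n k where sn: "R2 #>\<^bsub>F\<^esub> s = lprod (F Mod R2) (\<lambda>l. R2 #>\<^bsub>F\<^esub> y l) L1 n"
        and k: "k \<in> R2" and sk: "s = k \<otimes>\<^bsub>F\<^esub> lprod F y L1 n"
      using T_elim[OF Fg R2N dL1 yL1 yc1] by blast
    have kc: "k \<in> carrier F" using k R2c by blast
    have Pc: "lprod F y L1 n \<in> carrier F" using F.lprod_closed[OF yL1] .
    have "fst (\<phi> s) = (\<lambda>i. 0)" using \<phi>G2[OF sG] .
    moreover have "fst (\<phi> k) = (\<lambda>i. 0)" using \<phi>G2 k R2G2 by blast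
    moreover have "\<phi> s = \<phi> k \<otimes>\<^bsub>Hgrp\<^esub> \<phi> (lprod F y L1 n)" using sk kc Pc by simp
    ultimately have P0: "fst (\<phi> (lprod F y L1 n)) = (\<lambda>i. 0)" by (simp add: fst_Hmult)
    have "\<phi> (lprod F y L1 n) = lprod Hgrp (\<lambda>l. \<phi> (y l)) L1 n"
      by (rule lprod_hom[OF Fg Hgrp_group \<phi>hom yL1])
    then have "fst (\<phi> (lprod F y L1 n)) = (\<lambda>i. sum_list (map (\<lambda>l. n l * fst (\<phi> (y l)) i) L1))"
      by (simp add: lprod_H_fst)
    then have sum0: "sum_list (map (\<lambda>l. n l * fst (\<phi> (y l)) i) L1) = 0" for i
      using P0 by (metis (mono_tags, lifting))
    have nz: "n i = 0" if i: "i \<in> set L1" for i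
    proof -
      have m: "map (\<lambda>l. n l * fst (\<phi> (y l)) i) L1 = map (\<lambda>l. if l = i then n l * int (r l) else 0) L1"
        using \<phi>y L1I unfolding ex_def by (intro map_cong) auto
      have "sum_list (map (\<lambda>l. if l = i then n l * int (r l) else 0) L1) = n i * int (r i)"
        using sum_delta_list[OF dL1, of i "\<lambda>l. n l * int (r l)"] i by simp
      then have "n i * int (r i) = 0" using sum0[of i, unfolded m] by simp
      moreover have "r i > 0" using assms(2) i L1I I_def by auto
      ultimately show ?thesis by simp
    qed
    interpret Q: group "F Mod R2" using R2N normal.factorgroup_is_group by blast
    have "lprod (F Mod R2) (\<lambda>l. R2 #>\<^bsub>F\<^esub> y l) L1 n = \<one>\<^bsub>F Mod R2\<^esub>"
      using Q.lprod_zero[OF _ wcarrier[OF Fg R2N dL1 yL1 yc1]] nz by blast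
    then have "R2 #>\<^bsub>F\<^esub> s = R2" using sn Qone by simp
    then show ?thesis using Qkernel[OF Fg R2N] sS Sc by blast
  qed
  have claim2: "s \<in> R3" if sS: "s \<in> S" and sG: "s \<in> G3" for s
  proof -
    have sR2: "s \<in> R2" using claim1 sS sG G3G2 by blast
    define ps where "ps = filter (\<lambda>p. fst p < snd p) (List.product [1..<t+1] [1..<t+1])"
    define L2 where "L2 = concat (map blk ps)"
    define z2 where "z2 p = cm F (y (fst p)) (x (snd p))" for p
    have ps_set: "set ps = {p. fst p \<in> I \<and> snd p \<in> I \<and> fst p < snd p}" unfolding ps_def I_def by auto
    have dps: "distinct ps" unfolding ps_def by (intro distinct_filter distinct_product) auto
    have ps_lt: "\<forall>p\<in>set ps. fst p < snd p" using ps_set by auto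
    have dL2: "distinct L2" unfolding L2_def by (rule distinct_blocks[OF dps ps_lt])
    have L2set: "set L2 = set ps \<union> (\<lambda>p. (snd p, fst p)) ` set ps" unfolding L2_def by (rule set_blocks)
    have L2I: "fst l \<in> I \<and> snd l \<in> I" if "l \<in> set L2" for l using that unfolding L2set ps_set by auto
    have z2R2: "z2 l \<in> R2" if "l \<in> set L2" for l
    proof -
      have "y (fst l) \<in> S" "x (snd l) \<in> carrier F" using L2I[OF that] yS xI by auto
      then show ?thesis unfolding z2_def R2_def by (rule cm_in_comm[OF Fg])
    qed
    have zL2: "z2 ` set L2 \<subseteq> carrier F" using z2R2 R2c by blast
    have zc2: "\<forall>l\<in>set L2. \<forall>g\<in>carrier F. cm F (z2 l) g \<in> R3"
      unfolding R3_def using z2R2 cm_in_comm[OF Fg] by blast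
    let ?T = "Tset F R3 z2 L2"
    have T2: "subgroup ?T F" by (rule T_sub[OF Fg R3N dL2 zL2 zc2])
    have Tcj: "g \<otimes>\<^bsub>F\<^esub> a \<otimes>\<^bsub>F\<^esub> inv\<^bsub>F\<^esub> g \<in> ?T" if "a \<in> ?T" "g \<in> carrier F" for a g
      using T_conj[OF Fg R3N dL2 zL2 zc2] that by blast
    have Tone: "\<one>\<^bsub>F\<^esub> \<in> ?T" using subgroup.one_closed[OF T2] .
    have Tinv: "inv\<^bsub>F\<^esub> a \<in> ?T" if "a \<in> ?T" for a using subgroup.m_inv_closed[OF T2 that] .
    have Tmult: "a \<otimes>\<^bsub>F\<^esub> b \<in> ?T" if "a \<in> ?T" "b \<in> ?T" for a b using subgroup.m_closed[OF T2] that .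
    have base: "cm F (y i) (x j) \<in> ?T" if i: "i \<in> I" and j: "j \<in> I" for i j
    proof (cases "i = j")
      case True
      have xc: "x i \<in> carrier F" using xI i by auto
      have "y i \<otimes>\<^bsub>F\<^esub> x i = x i \<otimes>\<^bsub>F\<^esub> y i" unfolding y_def using F.nat_pow_Suc2[OF xc, of "r i"] by simp
      then have "cm F (y i) (x j) = \<one>\<^bsub>F\<^esub>" using True cm_commute[OF Fg] yc[OF i] xc by simp
      then show ?thesis using Tone by simp
    next
      case False
      have ij: "(i, j) \<in> set L2"
      proof (cases "i < j")
        case True then show ?thesis using i j unfolding L2set ps_set by auto
      next
        case False then have "j < i" using \<open>i \<noteq> j\<close> by simp
        then have "(j, i) \<in> set ps" using i j unfolding ps_set by auto
        then show ?thesis unfolding L2set by force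
      qed
      have "z2 (i, j) \<in> ?T" by (rule T_gen[OF Fg R3N dL2 zL2 zc2 ij])
      moreover have "z2 (i, j) = cm F (y i) (x j)" by (simp add: z2_def)
      ultimately show ?thesis by simp
    qed
    have stepA: "cm F (y i) f \<in> ?T" if i: "i \<in> I" and f: "f \<in> carrier F" for i f
    proof -
      have "f \<in> generate F (x ` I)" using f gen by simp
      then show ?thesis
      proof (induction rule: generate.induct)
        case one then show ?case using cm_one_right[OF Fg yc[OF i]] Tone by simp
      next
        case (incl h)
        then obtain j where j: "j \<in> I" "h = x j" by auto
        then show ?case using base[OF i j(1)] by simp
      next
        case (inv h)
        then obtain j where j: "j \<in> I" "h = x j" by auto
        have hc: "h \<in> carrier F" using j xI by auto
        have "cm F (y i) h \<in> ?T" using base[OF i j(1)] j by simp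
        then have "inv\<^bsub>F\<^esub> (h \<otimes>\<^bsub>F\<^esub> cm F (y i) h \<otimes>\<^bsub>F\<^esub> inv\<^bsub>F\<^esub> h) \<in> ?T" using Tcj Tinv hc by blast
        then show ?case using cm_inv_right[OF Fg yc[OF i] hc] by simp
      next
        case (eng h1 h2)
        have hc: "h1 \<in> carrier F" "h2 \<in> carrier F" using eng.hyps gen by auto
        have "inv\<^bsub>F\<^esub> h2 \<otimes>\<^bsub>F\<^esub> cm F (y i) h1 \<otimes>\<^bsub>F\<^esub> inv\<^bsub>F\<^esub> (inv\<^bsub>F\<^esub> h2) \<in> ?T"
          using Tcj eng.IH(1) F.inv_closed[OF hc(2)] by blast
        then have "inv\<^bsub>F\<^esub> h2 \<otimes>\<^bsub>F\<^esub> cm F (y i) h1 \<otimes>\<^bsub>F\<^esub> h2 \<in> ?T" using hc by simp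
        then have "cm F (y i) h2 \<otimes>\<^bsub>F\<^esub> (inv\<^bsub>F\<^esub> h2 \<otimes>\<^bsub>F\<^esub> cm F (y i) h1 \<otimes>\<^bsub>F\<^esub> h2) \<in> ?T"
          using Tmult eng.IH(2) by blast
        then show ?case using cm_mult_right[OF Fg yc[OF i] hc] by simp
      qed
    qed
    have stepY: "cm F h f \<in> ?T" if h: "h \<in> Ys" and f: "f \<in> carrier F" for h f
    proof -
      obtain g i where g: "g \<in> carrier F" and i: "i \<in> I" and hg: "h = g \<otimes>\<^bsub>F\<^esub> y i \<otimes>\<^bsub>F\<^esub> inv\<^bsub>F\<^esub> g"
        using h Ys_iff by blast
      have "cm F (y i) (inv\<^bsub>F\<^esub> g \<otimes>\<^bsub>F\<^esub> f \<otimes>\<^bsub>F\<^esub> g) \<in> ?T" using stepA[OF i] g f by simp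
      then have "g \<otimes>\<^bsub>F\<^esub> cm F (y i) (inv\<^bsub>F\<^esub> g \<otimes>\<^bsub>F\<^esub> f \<otimes>\<^bsub>F\<^esub> g) \<otimes>\<^bsub>F\<^esub> inv\<^bsub>F\<^esub> g \<in> ?T"
        using Tcj g by blast
      then show ?thesis unfolding hg using cm_conj_left[OF Fg yc[OF i] f g] by simp
    qed
    have stepB: "cm F a f \<in> ?T" if a: "a \<in> S" and f: "f \<in> carrier F" for a f
    proof -
      have "a \<in> generate F Ys" using a S by simp
      then show ?thesis
      proof (induction rule: generate.induct)
        case one then show ?case using cm_one_left[OF Fg f] Tone by simp
      next
        case (incl h) then show ?case using stepY f by blast
      next
        case (inv h)
        have hc: "h \<in> carrier F" using inv Ysc by auto
        have "cm F h f \<in> ?T" using stepY inv f by blast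
        then have "inv\<^bsub>F\<^esub> (h \<otimes>\<^bsub>F\<^esub> cm F h f \<otimes>\<^bsub>F\<^esub> inv\<^bsub>F\<^esub> h) \<in> ?T" using Tcj Tinv hc by blast
        then show ?case using cm_inv_left[OF Fg hc f] by simp
      next
        case (eng h1 h2)
        have hc: "h1 \<in> carrier F" "h2 \<in> carrier F"
          using eng.hyps F.generate_in_carrier[OF Ysc] by auto
        have "inv\<^bsub>F\<^esub> h2 \<otimes>\<^bsub>F\<^esub> cm F h1 f \<otimes>\<^bsub>F\<^esub> inv\<^bsub>F\<^esub> (inv\<^bsub>F\<^esub> h2) \<in> ?T"
          using Tcj eng.IH(1) F.inv_closed[OF hc(2)] by blast
        then have "inv\<^bsub>F\<^esub> h2 \<otimes>\<^bsub>F\<^esub> cm F h1 f \<otimes>\<^bsub>F\<^esub> h2 \<in> ?T" using hc by simp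
        then have "(inv\<^bsub>F\<^esub> h2 \<otimes>\<^bsub>F\<^esub> cm F h1 f \<otimes>\<^bsub>F\<^esub> h2) \<otimes>\<^bsub>F\<^esub> cm F h2 f \<in> ?T"
          using Tmult eng.IH(2) by blast
        then show ?case using cm_mult_left[OF Fg hc f] by simp
      qed
    qed
    have "R2 \<subseteq> ?T" unfolding R2_def comm_subgroup_cm
      by (rule F.generate_subgroup_incl[OF _ T2]) (use stepB in blast)
    then have "s \<in> ?T" using sR2 by blast
    then obtain n k where sn: "R3 #>\<^bsub>F\<^esub> s = lprod (F Mod R3) (\<lambda>l. R3 #>\<^bsub>F\<^esub> z2 l) L2 n"
        and k: "k \<in> R3" and sk: "s = k \<otimes>\<^bsub>F\<^esub> lprod F z2 L2 n"
      using T_elim[OF Fg R3N dL2 zL2 zc2] by blast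
    have kc: "k \<in> carrier F" using k R3R2 R2c by blast
    have Pc: "lprod F z2 L2 n \<in> carrier F" using F.lprod_closed[OF zL2] .
    have "\<phi> s = \<one>\<^bsub>Hgrp\<^esub>" using \<phi>G3[OF sG] .
    moreover have "\<phi> k = \<one>\<^bsub>Hgrp\<^esub>" using \<phi>G3 k R3G3 by blast
    moreover have "\<phi> s = \<phi> k \<otimes>\<^bsub>Hgrp\<^esub> \<phi> (lprod F z2 L2 n)" using sk kc Pc by simp
    ultimately have P1: "\<phi> (lprod F z2 L2 n) = \<one>\<^bsub>Hgrp\<^esub>"
      using monoid.l_one[OF group.is_monoid[OF Hgrp_group], of "\<phi> (lprod F z2 L2 n)"] by simp
    have \<phi>xf: "fst (\<phi> (x j)) = ex j" if "j \<in> I" for j using \<phi>x that by simp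
    have \<phi>z2: "\<phi> (z2 l) = (\<lambda>i. 0, \<lambda>p q. int (r (fst l)) * (ex (fst l) p * ex (snd l) q - ex (snd l) p * ex (fst l) q))"
      if l: "l \<in> set L2" for l
    proof -
      have a: "fst l \<in> I" and b: "snd l \<in> I" using L2I[OF l] by auto
      have "\<phi> (z2 l) = (\<lambda>i. 0, \<lambda>i j. fst (\<phi> (y (fst l))) i * fst (\<phi> (x (snd l))) j - fst (\<phi> (x (snd l))) i * fst (\<phi> (y (fst l))) j)"
        unfolding z2_def using \<phi>cm yc[OF a] xI b by auto
      then show ?thesis unfolding \<phi>y[OF a] \<phi>xf[OF b] by (simp add: algebra_simps)
    qed
    have "\<phi> (lprod F z2 L2 n) = lprod Hgrp (\<lambda>l. \<phi> (z2 l)) L2 n"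
      by (rule lprod_hom[OF Fg Hgrp_group \<phi>hom zL2])
    also have "\<dots> = (\<lambda>i. 0, \<lambda>p q. sum_list (map (\<lambda>l. n l * snd (\<phi> (z2 l)) p q) L2))"
      by (rule lprod_H_snd) (use \<phi>z2 in simp)
    finally have sum0: "sum_list (map (\<lambda>l. n l * snd (\<phi> (z2 l)) p q) L2) = 0" for p q
      using P1 unfolding Hgrp_one by (metis (mono_tags, lifting) prod.inject)
    have rel: "n (i, j) * int (r i) = n (j, i) * int (r j)" if ij: "(i, j) \<in> set ps" for i j
    proof -
      have ij2: "i \<in> I" "j \<in> I" "i < j" using ij ps_set by auto
      have "\<forall>p\<in>set ps. snd (\<phi> (z2 p)) i j = (if p = (i, j) then int (r i) else 0) \<and>
                      snd (\<phi> (z2 (snd p, fst p))) i j = (if p = (i, j) then - int (r j) else 0)"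
      proof
        fix p assume p: "p \<in> set ps"
        have "p \<in> set L2" "(snd p, fst p) \<in> set L2" using p unfolding L2set by auto
        moreover have "fst p < snd p" using p ps_lt by auto
        ultimately show "snd (\<phi> (z2 p)) i j = (if p = (i, j) then int (r i) else 0) \<and>
                      snd (\<phi> (z2 (snd p, fst p))) i j = (if p = (i, j) then - int (r j) else 0)"
          using \<phi>z2 ij2 unfolding ex_def by (cases p) auto
      qed
      from block_sum[OF dps this, of n]
      have "sum_list (map (\<lambda>l. n l * snd (\<phi> (z2 l)) i j) L2) = n (i, j) * int (r i) - n (j, i) * int (r j)"
        using ij unfolding L2_def by simp
      then show ?thesis using sum0[of i j] by simp
    qed
    interpret Q: group "F Mod R3" using R3N normal.factorgroup_is_group by blast
    define w where "w l = R3 #>\<^bsub>F\<^esub> z2 l" for l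
    have wc: "Q.central (w l)" if "l \<in> set L2" for l
      using wcentral[OF Fg R3N dL2 zL2 zc2] that unfolding w_def by blast
    have wcar: "w l \<in> carrier (F Mod R3)" if "l \<in> set L2" for l
      using wc[OF that] Q.central_def by blast
    have cenR2: "Q.central (R3 #>\<^bsub>F\<^esub> c)" if "c \<in> R2" for c
      using central_mod[OF Fg R3N] that R2c cm_in_comm[OF Fg, of c R2 _ "carrier F"] unfolding R3_def by blast
    have powrel: "R3 #>\<^bsub>F\<^esub> cm F a (f [^]\<^bsub>F\<^esub> m) = (R3 #>\<^bsub>F\<^esub> cm F a f) [^]\<^bsub>F Mod R3\<^esub> m"
      if a: "a \<in> S" and f: "f \<in> carrier F" for a f and m :: nat
    proof (induction m)
      case 0
      have ac: "a \<in> carrier F" using a Sc by blast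
      have "R3 #>\<^bsub>F\<^esub> \<one>\<^bsub>F\<^esub> = R3" using Qkernel[OF Fg R3N F.one_closed]
        subgroup.one_closed[OF normal_imp_subgroup[OF R3N]] by simp
      then show ?case using cm_one_right[OF Fg ac] Qone by simp
    next
      case (Suc m)
      have ac: "a \<in> carrier F" using a Sc by blast
      have fm: "f [^]\<^bsub>F\<^esub> m \<in> carrier F" using f by simp
      let ?c = "cm F a (f [^]\<^bsub>F\<^esub> m)" and ?d = "cm F a f"
      have cR2: "?c \<in> R2" "?d \<in> R2" unfolding R2_def using a fm f by (auto intro: cm_in_comm[OF Fg])
      have cc: "?c \<in> carrier F" "?d \<in> carrier F" using ac fm f by auto
      have "cm F a (f [^]\<^bsub>F\<^esub> Suc m) = ?d \<otimes>\<^bsub>F\<^esub> (inv\<^bsub>F\<^esub> f \<otimes>\<^bsub>F\<^esub> ?c \<otimes>\<^bsub>F\<^esub> f)"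
        using cm_mult_right[OF Fg ac fm f] by simp
      then have "R3 #>\<^bsub>F\<^esub> cm F a (f [^]\<^bsub>F\<^esub> Suc m)
          = (R3 #>\<^bsub>F\<^esub> ?d) \<otimes>\<^bsub>F Mod R3\<^esub> ((inv\<^bsub>F Mod R3\<^esub> (R3 #>\<^bsub>F\<^esub> f) \<otimes>\<^bsub>F Mod R3\<^esub> (R3 #>\<^bsub>F\<^esub> ?c)) \<otimes>\<^bsub>F Mod R3\<^esub> (R3 #>\<^bsub>F\<^esub> f))"
        using Qmult[OF Fg R3N] Qinv[OF Fg R3N f] cc f by simp
      also have "inv\<^bsub>F Mod R3\<^esub> (R3 #>\<^bsub>F\<^esub> f) \<otimes>\<^bsub>F Mod R3\<^esub> (R3 #>\<^bsub>F\<^esub> ?c) \<otimes>\<^bsub>F Mod R3\<^esub> (R3 #>\<^bsub>F\<^esub> f)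
          = R3 #>\<^bsub>F\<^esub> ?c"
        by (rule central_conj[OF Q.is_group cenR2[OF cR2(1)] Qin[OF Fg R3N f]])
      also have "R3 #>\<^bsub>F\<^esub> ?c = (R3 #>\<^bsub>F\<^esub> ?d) [^]\<^bsub>F Mod R3\<^esub> m" by (rule Suc.IH)
      also have "(R3 #>\<^bsub>F\<^esub> ?d) \<otimes>\<^bsub>F Mod R3\<^esub> (R3 #>\<^bsub>F\<^esub> ?d) [^]\<^bsub>F Mod R3\<^esub> m
          = (R3 #>\<^bsub>F\<^esub> ?d) [^]\<^bsub>F Mod R3\<^esub> m \<otimes>\<^bsub>F Mod R3\<^esub> (R3 #>\<^bsub>F\<^esub> ?d)"
        using cenR2[OF cR2(2)] Q.nat_pow_closed[OF Qin[OF Fg R3N cc(2)], of m] unfolding Q.central_def by blast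
      also have "\<dots> = (R3 #>\<^bsub>F\<^esub> ?d) [^]\<^bsub>F Mod R3\<^esub> Suc m" by simp
      finally show ?case .
    qed
    have RQ: "w (i, j) [^]\<^bsub>F Mod R3\<^esub> (int (r j)) \<otimes>\<^bsub>F Mod R3\<^esub> w (j, i) [^]\<^bsub>F Mod R3\<^esub> (int (r i)) = \<one>\<^bsub>F Mod R3\<^esub>"
      if i: "i \<in> I" and j: "j \<in> I" for i j
    proof -
      have xic: "x i \<in> carrier F" and xjc: "x j \<in> carrier F" using xI i j by auto
      have "w (i, j) [^]\<^bsub>F Mod R3\<^esub> (int (r j)) = R3 #>\<^bsub>F\<^esub> cm F (y i) (y j)"
        unfolding w_def z2_def int_pow_int using powrel[OF yS[OF i] xjc, of "r j"] by (simp add: y_def)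
      moreover have "w (j, i) [^]\<^bsub>F Mod R3\<^esub> (int (r i)) = R3 #>\<^bsub>F\<^esub> cm F (y j) (y i)"
        unfolding w_def z2_def int_pow_int using powrel[OF yS[OF j] xic, of "r i"] by (simp add: y_def)
      ultimately have "w (i, j) [^]\<^bsub>F Mod R3\<^esub> (int (r j)) \<otimes>\<^bsub>F Mod R3\<^esub> w (j, i) [^]\<^bsub>F Mod R3\<^esub> (int (r i))
          = R3 #>\<^bsub>F\<^esub> (cm F (y i) (y j) \<otimes>\<^bsub>F\<^esub> cm F (y j) (y i))"
        using Qmult[OF Fg R3N] yc i j by simp
      also have "\<dots> = R3 #>\<^bsub>F\<^esub> \<one>\<^bsub>F\<^esub>" using cm_swap[OF Fg] yc i j by simp
      also have "\<dots> = \<one>\<^bsub>F Mod R3\<^esub>" unfolding Qone using Qkernel[OF Fg R3N F.one_closed]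
        subgroup.one_closed[OF normal_imp_subgroup[OF R3N]] by simp
      finally show ?thesis .
    qed
    have blk1: "lprod (F Mod R3) w (blk p) n = \<one>\<^bsub>F Mod R3\<^esub>" if p: "p \<in> set ps" for p
    proof -
      obtain i j where pij: "p = (i, j)" by (cases p)
      have ij: "i \<in> I" "j \<in> I" "i < j" using p pij ps_set by auto
      have inL: "(i, j) \<in> set L2" "(j, i) \<in> set L2" using p pij unfolding L2set by force+
      have "coprime (r j) (r i)" using assms(3) ij unfolding I_def coprime_iff_gcd_eq_1 by auto
      then have cop: "coprime (int (r j)) (int (r i))" by simp
      have "int (r j) dvd n (i, j) * int (r i)" using rel[OF p[unfolded pij]] by simp
      then have "int (r j) dvd n (i, j)" using coprime_dvd_mult_left_iff[OF cop] by blast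
      then obtain m where m1: "n (i, j) = int (r j) * m" by (auto elim: dvdE)
      have rj: "r j > 0" using assms(2) ij unfolding I_def by auto
      have "int (r j) * (int (r i) * m) = int (r j) * n (j, i)"
        using rel[OF p[unfolded pij]] m1 by (simp add: algebra_simps)
      then have m2: "n (j, i) = int (r i) * m" using rj by simp
      define A where "A = w (i, j) [^]\<^bsub>F Mod R3\<^esub> (int (r j))"
      define B where "B = w (j, i) [^]\<^bsub>F Mod R3\<^esub> (int (r i))"
      have cA: "Q.central A" "Q.central B" unfolding A_def B_def using wc inL Q.central_pow by auto
      have Ac: "A \<in> carrier (F Mod R3)" "B \<in> carrier (F Mod R3)" using cA Q.central_def by auto
      have AB: "A \<otimes>\<^bsub>F Mod R3\<^esub> B = B \<otimes>\<^bsub>F Mod R3\<^esub> A" using cA Ac Q.central_def by blast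
      have e1: "w (i, j) [^]\<^bsub>F Mod R3\<^esub> n (i, j) = A [^]\<^bsub>F Mod R3\<^esub> m"
        unfolding A_def m1 using Q.int_pow_pow[OF wcar[OF inL(1)]] by simp
      have e2: "w (j, i) [^]\<^bsub>F Mod R3\<^esub> n (j, i) = B [^]\<^bsub>F Mod R3\<^esub> m"
        unfolding B_def m2 using Q.int_pow_pow[OF wcar[OF inL(2)]] by simp
      have "lprod (F Mod R3) w (blk p) n = w (i, j) [^]\<^bsub>F Mod R3\<^esub> n (i, j) \<otimes>\<^bsub>F Mod R3\<^esub>
           (w (j, i) [^]\<^bsub>F Mod R3\<^esub> n (j, i) \<otimes>\<^bsub>F Mod R3\<^esub> \<one>\<^bsub>F Mod R3\<^esub>)"
        unfolding pij blk_def lprod_Cons lprod_Nil fst_conv snd_conv ..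
      also have "\<dots> = A [^]\<^bsub>F Mod R3\<^esub> m \<otimes>\<^bsub>F Mod R3\<^esub> B [^]\<^bsub>F Mod R3\<^esub> m"
        unfolding e1 e2 Q.r_one[OF Q.int_pow_closed[OF Ac(2)]] ..
      also have "\<dots> = (A \<otimes>\<^bsub>F Mod R3\<^esub> B) [^]\<^bsub>F Mod R3\<^esub> m"
        using Q.int_pow_mult_distrib[OF AB Ac] by simp
      also have "A \<otimes>\<^bsub>F Mod R3\<^esub> B = \<one>\<^bsub>F Mod R3\<^esub>" unfolding A_def B_def using RQ ij by blast
      finally show ?thesis by (simp only: Q.int_pow_one)
    qed
    have "lprod (F Mod R3) w L2 n = \<one>\<^bsub>F Mod R3\<^esub>"
      unfolding L2_def by (rule lprod_blocks[OF Q.is_group]) (use wcar blk1 L2_def in auto)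
    then have "R3 #>\<^bsub>F\<^esub> s = R3" using sn Qone unfolding w_def by simp
    then show ?thesis using Qkernel[OF Fg R3N] sS Sc by blast
  qed
  show ?thesis unfolding rho2 rho3 lc2 lc3
    using claim1 claim2 R2S R3R2 G3G2 R2G2 R3G3 by blast
qed

end
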